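(* Let $U^3$ be the orthogonal sum of three hyperbolic planes and let $\{e_1,f_1\}$ be a standard basis of the first copy $U_1$ of $U$ ($e_1^2=f_1^2=0$, $e_1\cdot f_1=1$). For every integer $d\ge1$, the group $SO^+(U^3)$ is generated by the union $$SO^+_{e_1+df_1}(U^3)\cup SO^+_{de_1+f_1}(U^3)\cup SO^+_{e_1+(d+1)f_1}(U^3)\cup SO^+_{(d+1)e_1+f_1}(U^3).$$
   Context: $SO^+(L)$ is the group of isometries of the lattice $L$ of determinant one preserving the orientation of the positive cone; for $a\in L$, $SO^+_a(L)=\{\varphi\in SO^+(L):\varphi(a)=a\}$. *)

theory Defs
  imports "HOL-Analysis.Analysis" "HOL-Algebra.Generated_Groups"
begin

text \<open>The lattice U^3 = U_1 (+) U_2 (+) U_3 is modelled as int^(3 x 2):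
  the coordinate x$(k,0) is the e_k-coordinate and x$(k,1) the f_k-coordinate
  (k = 0,1,2 indexes the three hyperbolic planes; k = 0 is U_1).\<close>

type_synonym U3 = "int ^ (3 \<times> 2)"
type_synonym U3mat = "int ^ (3 \<times> 2) ^ (3 \<times> 2)"

definition e :: "3 \<Rightarrow> U3" where "e k = axis (k, 0) 1"
definition f :: "3 \<Rightarrow> U3" where "f k = axis (k, 1) 1"

definition bil :: "U3 \<Rightarrow> U3 \<Rightarrow> int" where
  "bil x y = (\<Sum>k\<in>UNIV. x $ (k, 0) * y $ (k, 1) + x $ (k, 1) * y $ (k, 0))"

definition SO_U3 :: "U3mat set" where
  "SO_U3 = {A. (\<forall>x y. bil (A *v x) (A *v y) = bil x y) \<and> det A = 1}"

text \<open>Orientation of the positive cone: W = span{e_k + f_k} is a maximal positive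
  definite subspace (orthogonal basis, squares 2). A preserves the orientation iff
  the composite W --A--> V --orthogonal projection--> W has positive determinant;
  its matrix in the basis e_k+f_k is (bil (w_k) (A w_l) / 2)_{k,l}.\<close>
definition wpos :: "3 \<Rightarrow> U3" where "wpos k = e k + f k"

definition orient_preserving :: "U3mat \<Rightarrow> bool" where
  "orient_preserving A \<longleftrightarrow>
     det ((\<chi> k l. bil (wpos k) (A *v wpos l)) :: int^3^3) > 0"

definition SOplus_U3 :: "U3mat set" where
  "SOplus_U3 = {A \<in> SO_U3. orient_preserving A}"

definition SOplus_stab :: "U3 \<Rightarrow> U3mat set" where
  "SOplus_stab a = {A \<in> SOplus_U3. A *v a = a}"

definition SOplus_group :: "U3mat monoid" where
  "SOplus_group = \<lparr>carrier = SOplus_U3, mult = (**), one = mat 1\<rparr>"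

end

theory Submission
  imports Defs
begin

lemma three0: "(3::3) = 0" by simp
lemma ex3: "(x::3) = 0 \<or> x = 1 \<or> x = 2" using exhaust_3[of x] unfolding three0 by blast
lemma UNIV3: "(UNIV::3 set) = {0,1,2}" using ex3 by blast
lemma n01: "(0::3) \<noteq> 1" "(0::3) \<noteq> 2" "(1::3) \<noteq> 2" by simp_all
lemma sum3: "(\<Sum>k\<in>(UNIV::3 set). g k) = g 0 + g 1 + g 2"
  unfolding UNIV3 using n01 by (simp add: add.assoc)
lemma two0: "(2::2) = 0" by simp
lemma ex2: "(x::2) = 0 \<or> x = 1" using exhaust_2[of x] unfolding two0 by blast
lemma n01b: "(0::2) \<noteq> 1" by simp

definition bilG :: "'a::comm_ring_1 ^ (3 \<times> 2) \<Rightarrow> 'a ^ (3 \<times> 2) \<Rightarrow> 'a" where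
  "bilG x y = (\<Sum>k\<in>UNIV. x $ (k, 0) * y $ (k, 1) + x $ (k, 1) * y $ (k, 0))"
definition qq :: "'a::comm_ring_1 ^ (3 \<times> 2) \<Rightarrow> 'a" where
  "qq x = (\<Sum>k\<in>UNIV. x $ (k, 0) * x $ (k, 1))"

lemma bil_bilG: "bil = bilG" by (simp add: fun_eq_iff bil_def bilG_def)

lemma bilG_sym: "bilG x y = bilG y x" unfolding bilG_def by (simp add: algebra_simps)
lemma bilG_add_left: "bilG (x + y) z = bilG x z + bilG y z"
  unfolding bilG_def by (simp add: algebra_simps sum.distrib)
lemma bilG_add_right: "bilG z (x + y) = bilG z x + bilG z y"
  unfolding bilG_def by (simp add: algebra_simps sum.distrib)
lemma bilG_diff_left: "bilG (x - y) z = bilG x z - bilG y z"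
  unfolding bilG_def by (simp add: algebra_simps sum_subtractf)
lemma bilG_diff_right: "bilG z (x - y) = bilG z x - bilG z y"
  unfolding bilG_def by (simp add: algebra_simps sum_subtractf)
lemma bilG_scale_left: "bilG (c *s x) z = c * bilG x z"
  unfolding bilG_def by (simp add: algebra_simps sum_distrib_left)
lemma bilG_scale_right: "bilG z (c *s x) = c * bilG z x"
  unfolding bilG_def by (simp add: algebra_simps sum_distrib_left)
lemma bilG_neg_left: "bilG (- x) z = - bilG x z"
  unfolding bilG_def by (subst sum_negf[symmetric]) (simp add: algebra_simps)
lemma bilG_neg_right: "bilG z (- x) = - bilG z x"
  unfolding bilG_def by (subst sum_negf[symmetric]) (simp add: algebra_simps)
lemma bilG_zero[simp]: "bilG 0 z = 0" "bilG z 0 = 0"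
  unfolding bilG_def by simp_all
lemma qq_add: "qq (x + y) = qq x + qq y + bilG x y"
  unfolding qq_def bilG_def by (simp add: algebra_simps sum.distrib)
lemma qq_scale: "qq (c *s x) = c * c * qq x"
  unfolding qq_def by (simp add: algebra_simps sum_distrib_left)
lemma qq_neg: "qq (- x) = qq x"
  unfolding qq_def by simp
lemma qq_zero[simp]: "qq 0 = 0" unfolding qq_def by simp
lemma bilG_self: "bilG x x = 2 * qq x"
  unfolding qq_def bilG_def by (simp add: algebra_simps sum_distrib_left sum.distrib)

lemmas bilG_lin = bilG_add_left bilG_add_right bilG_diff_left bilG_diff_right
  bilG_scale_left bilG_scale_right bilG_neg_left bilG_neg_right

lemma axis_comp: "axis i x $ j = (if j = i then x else 0)"
  by (simp add: axis_def)
lemma sum_delta_mult: "(\<Sum>ka\<in>(UNIV::'b::finite set). (g ka::'a::comm_ring_1) * (if ka = k then 1 else 0)) = g k"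
proof -
  have "(\<Sum>ka\<in>(UNIV::'b set). g ka * (if ka = k then 1 else 0)) = (\<Sum>ka\<in>UNIV. if ka = k then g ka else 0)"
    by (rule sum.cong) auto
  also have "\<dots> = g k" by (simp add: sum.delta)
  finally show ?thesis .
qed
lemma bilG_axis0: "bilG z (axis (k, 0) 1) = z $ (k, 1)"
  unfolding bilG_def axis_comp by (simp add: sum_delta_mult)
lemma bilG_axis1: "bilG z (axis (k, 1) 1) = z $ (k, 0)"
  unfolding bilG_def axis_comp by (simp add: sum_delta_mult)
lemma bilG_axis_right: "bilG z (axis (k, c) 1) = z $ (k, 1 - c)"
  using ex2[of c] bilG_axis0 bilG_axis1 by auto
lemma bilG_axis_left: "bilG (axis (k, c) 1) z = z $ (k, 1 - c)"
  by (subst bilG_sym) (rule bilG_axis_right)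
lemma qq_axis: "qq (axis (k, c) (1::'a::comm_ring_1)) = 0"
  using ex2[of c] by (auto simp: qq_def axis_comp)

lemma bilG_sum_right: "bilG z (\<Sum>i\<in>S. g i) = (\<Sum>i\<in>S. bilG z (g i))"
  unfolding bilG_def by (simp add: sum_distrib_left sum_distrib_right sum.distrib[symmetric] algebra_simps; rule sum.swap)
lemma bilG_sum_left: "bilG (\<Sum>i\<in>S. g i) z = (\<Sum>i\<in>S. bilG (g i) z)"
  using bilG_sum_right[of z g S] by (simp add: bilG_sym)

lemma sum_basis: "(\<Sum>j\<in>UNIV. z $ j *s axis j (1::'a::comm_ring_1)) = (z::'a^'n)"
  by (simp add: vec_eq_iff axis_def if_distrib sum.delta cong: if_cong)

lemma lin_matrix:
  fixes F :: "'a::comm_ring_1^'n \<Rightarrow> 'a^'m"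
  assumes add: "\<And>a b. F (a+b) = F a + F b" and sm: "\<And>c a. F (c *s a) = c *s F a"
  shows "(\<chi> i j. F (axis j 1) $ i) *v z = F z"
proof -
  have F0: "F 0 = 0" using sm[of 0 0] by simp
  have Fs: "F (\<Sum>j\<in>S. g j) = (\<Sum>j\<in>S. F (g j))" if "finite S" for S and g :: "'n \<Rightarrow> _"
    using that by (induction S rule: finite_induct) (auto simp: F0 add)
  have "F z = (\<Sum>j\<in>UNIV. z$j *s F (axis j 1))"
    using Fs[of UNIV "\<lambda>j. z$j *s axis j 1"] by (simp add: sum_basis sm)
  then show ?thesis by (simp add: vec_eq_iff matrix_vector_mult_def mult.commute)
qed

lemma mat_col: "(A *v axis j 1) $ i = (A $ i $ j :: 'a::comm_ring_1)"
  by (simp add: matrix_vector_mult_def axis_def if_distrib sum.delta cong: if_cong)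

lemma mat_eqI: "(\<And>z. A *v z = B *v (z::'a::comm_ring_1^'n)) \<Longrightarrow> A = B"
  by (metis mat_col vec_eq_iff)

lemma mv_sum: "(A::'a::comm_ring_1^'n^'m) *v (\<Sum>i\<in>S. g i) = (\<Sum>i\<in>S. A *v g i)"
  by (induction S rule: infinite_finite_induct) (simp_all add: matrix_vector_right_distrib)

lemma mv_scale: "(A::'a::comm_ring_1^'n^'m) *v (c *s x) = c *s (A *v x)"
  by (simp add: vec_eq_iff matrix_vector_mult_def sum_distrib_left algebra_simps)

lemma bil_expand:
  fixes X :: "'a::comm_ring_1^(3\<times>2)^(3\<times>2)"
  shows "bilG (X *v a) (X *v b) = (\<Sum>j\<in>UNIV. b$j * (\<Sum>i\<in>UNIV. a$i * bilG (X *v axis i 1) (X *v axis j 1)))"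
proof -
  have ea: "a = (\<Sum>i\<in>UNIV. a $ i *s axis i 1)" and eb: "b = (\<Sum>j\<in>UNIV. b $ j *s axis j 1)"
    by (simp_all add: sum_basis)
  show ?thesis
    by (subst ea, subst eb) (simp add: mv_sum mv_scale bilG_sum_left bilG_sum_right bilG_scale_left bilG_scale_right)
qed

lemma iso_from_basis:
  fixes A :: "'a::comm_ring_1^(3\<times>2)^(3\<times>2)"
  assumes "\<And>i j. bilG (A *v axis i 1) (A *v axis j 1) = bilG (axis i 1) (axis j 1)"
  shows "bilG (A *v a) (A *v b) = bilG a b"
  using bil_expand[of A a b] bil_expand[of "mat 1" a b] by (simp add: assms)

section \<open>Eichler transformations\<close>

definition EF :: "'a::comm_ring_1^(3\<times>2) \<Rightarrow> 'a^(3\<times>2) \<Rightarrow> 'a^(3\<times>2) \<Rightarrow> 'a^(3\<times>2)" where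
  "EF u x z = z - bilG z u *s x + bilG z x *s u - (qq x * bilG z u) *s u"
definition Eich :: "'a::comm_ring_1^(3\<times>2) \<Rightarrow> 'a^(3\<times>2) \<Rightarrow> 'a^(3\<times>2)^(3\<times>2)" where
  "Eich u x = (\<chi> i j. EF u x (axis j 1) $ i)"

lemma Eich_mv: "Eich u x *v z = EF u x z"
  unfolding Eich_def
  by (rule lin_matrix) (simp_all add: EF_def bilG_lin vec_eq_iff algebra_simps)

lemma EF_iso:
  assumes "qq u = 0" "bilG u x = 0"
  shows "bilG (EF u x z) (EF u x y) = bilG z y"
proof -
  have s: "bilG u z = bilG z u" "bilG x z = bilG z x" "bilG u y = bilG y u" "bilG x y = bilG y x"
     "bilG x u = 0" "bilG u u = 0" "bilG x x = 2 * qq x"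
    using assms bilG_sym[of u z] bilG_sym[of x z] bilG_sym[of u y] bilG_sym[of x y]
      bilG_sym[of x u] bilG_self[of u] bilG_self[of x] by simp_all
  show ?thesis unfolding EF_def by (simp add: bilG_lin s assms algebra_simps)
qed

lemma EF_comp:
  assumes "qq u = 0" "bilG u x = 0" "bilG u y = 0"
  shows "EF u x (EF u y z) = EF u (x + y) z"
proof -
  have s: "bilG u u = 0" "bilG y u = 0" "bilG x u = 0" "bilG u z = bilG z u" "bilG y x = bilG x y"
    using assms bilG_sym[of y u] bilG_sym[of x u] bilG_sym[of u z] bilG_sym[of y x] bilG_self[of u]
    by simp_all
  have a: "bilG (EF u y z) u = bilG z u"
    unfolding EF_def by (simp add: bilG_lin s)
  have b: "bilG (EF u y z) x = bilG z x - bilG z u * bilG x y"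
    unfolding EF_def by (simp add: bilG_lin s assms(2))
  show ?thesis
    by (simp add: EF_def[of u x "EF u y z"] a b) (simp add: EF_def qq_add bilG_lin vec_eq_iff algebra_simps)
qed

lemma Eich_comp:
  assumes "qq u = 0" "bilG u x = 0" "bilG u y = 0"
  shows "Eich u x ** Eich u y = Eich u (x + y)"
  by (rule mat_eqI) (simp add: matrix_vector_mul_assoc[symmetric] Eich_mv EF_comp[OF assms])

lemma Eich_zero: "Eich u 0 = mat 1"
  by (rule mat_eqI) (simp add: Eich_mv EF_def)

lemma Eich_iso:
  assumes "qq u = 0" "bilG u x = 0"
  shows "bilG (Eich u x *v z) (Eich u x *v y) = bilG z y"
  by (simp add: Eich_mv EF_iso[OF assms])

section \<open>Transfer to the reals\<close>

definition ofv :: "int^'n \<Rightarrow> real^'n" where "ofv x = (\<chi> i. real_of_int (x $ i))"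
definition ofm :: "int^'n^'m \<Rightarrow> real^'n^'m" where "ofm A = (\<chi> i j. real_of_int (A $ i $ j))"

lemma ofv_comp[simp]: "ofv x $ i = real_of_int (x $ i)" by (simp add: ofv_def)
lemma ofm_comp[simp]: "ofm A $ i $ j = real_of_int (A $ i $ j)" by (simp add: ofm_def)
lemma ofm_mv: "ofm A *v ofv z = ofv (A *v z)"
  by (simp add: vec_eq_iff matrix_vector_mult_def)
lemma ofm_mult: "ofm (A ** B) = ofm A ** ofm B"
  by (simp add: vec_eq_iff matrix_matrix_mult_def)
lemma ofv_axis: "ofv (axis i 1) = axis i 1"
  by (simp add: vec_eq_iff axis_def)
lemma ofv_add: "ofv (x + y) = ofv x + ofv y" by (simp add: vec_eq_iff)
lemma bilG_ofv: "bilG (ofv x) (ofv y) = of_int (bilG x y)" by (simp add: bilG_def)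
lemma qq_ofv: "qq (ofv x) = of_int (qq x)" by (simp add: qq_def)
lemma ofv_EF: "ofv (EF u x z) = EF (ofv u) (ofv x) (ofv z)"
  by (simp add: EF_def vec_eq_iff bilG_ofv qq_ofv)
lemma ofm_Eich: "ofm (Eich u x) = Eich (ofv u) (ofv x)"
proof -
  have "real_of_int (EF u x (axis j 1) $ i) = EF (ofv u) (ofv x) (axis j 1) $ i" for i j
    using ofv_EF[of u x "axis j 1"] unfolding ofv_axis vec_eq_iff by (metis ofv_comp)
  then show ?thesis by (simp add: Eich_def vec_eq_iff)
qed
lemma det_ofm: "det (ofm A) = of_int (det A)"
  by (simp add: det_def of_int_sum of_int_prod)

definition wR :: "3 \<Rightarrow> real^(3\<times>2)" where "wR k = axis (k,0) 1 + axis (k,1) 1"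
definition MR :: "real^(3\<times>2)^(3\<times>2) \<Rightarrow> real^3^3" where
  "MR Y = (\<chi> k l. bilG (wR k) (Y *v wR l))"

lemma wpos_wR: "ofv (wpos k) = wR k"
  by (simp add: wpos_def wR_def e_def f_def ofv_add ofv_axis)

lemma orient_MR: "orient_preserving A \<longleftrightarrow> det (MR (ofm A)) > 0"
proof -
  have "MR (ofm A) = ofm ((\<chi> k l. bil (wpos k) (A *v wpos l)) :: int^3^3)"
    by (simp add: MR_def vec_eq_iff wpos_wR[symmetric] ofm_mv bilG_ofv bil_bilG)
  then show ?thesis by (simp add: orient_preserving_def det_ofm)
qed

lemma wR_comp: "(\<Sum>l\<in>UNIV. c$l *s wR l) $ (k, i) = c $ k"
proof -
  have "(\<Sum>l\<in>UNIV. c$l *s wR l) $ (k, i) = (\<Sum>l\<in>UNIV. c$l * (if l = k then 1 else 0))"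
    using ex2[of i] by (auto simp: wR_def axis_comp intro!: sum.cong)
  then show ?thesis by (simp add: sum_delta_mult)
qed

lemma MR_nonsing:
  assumes iso: "\<And>a b. bilG (Y *v a) (Y *v b) = bilG a b"
  shows "det (MR Y) \<noteq> 0"
proof -
  have "\<forall>c. MR Y *v c = 0 \<longrightarrow> c = 0"
  proof (intro allI impI)
    fix c :: "real^3" assume h: "MR Y *v c = 0"
    define z where "z = (\<Sum>l\<in>UNIV. c$l *s wR l)"
    define y where "y = Y *v z"
    have zc: "z $ (k, i) = c $ k" for k i unfolding z_def by (rule wR_comp)
    have "bilG (wR k) y = (MR Y *v c) $ k" for k
    proof -
      have "bilG (wR k) y = (\<Sum>l\<in>UNIV. c$l * bilG (wR k) (Y *v wR l))"
        by (simp add: y_def z_def mv_sum mv_scale bilG_sum_right bilG_scale_right)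
      also have "\<dots> = (MR Y *v c) $ k"
        by (simp add: MR_def matrix_vector_mult_def mult.commute)
      finally show ?thesis .
    qed
    then have "bilG (wR k) y = 0" for k using h by simp
    then have y0: "y $ (k,0) = - y $ (k,1)" for k
      by (simp add: wR_def bilG_add_left bilG_axis_left) (metis add.commute add_eq_0_iff)
    have "bilG y y = (\<Sum>k\<in>UNIV. - 2 * (y $ (k,1))\<^sup>2)"
      unfolding bilG_def by (rule sum.cong) (auto simp: y0 power2_eq_square)
    also have "\<dots> \<le> 0" by (intro sum_nonpos) simp
    finally have yy: "bilG y y \<le> 0" .
    have zz: "bilG z z = (\<Sum>k\<in>UNIV. 2 * (c $ k)\<^sup>2)"
      unfolding bilG_def by (rule sum.cong) (auto simp: zc power2_eq_square)
    have "bilG z z = bilG y y" using iso[of z z] by (simp add: y_def)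
    with yy zz have "(\<Sum>k\<in>UNIV. 2 * (c $ k)\<^sup>2) \<le> 0" by simp
    moreover have "(\<Sum>k\<in>UNIV. 2 * (c $ k)\<^sup>2) \<ge> 0" by (intro sum_nonneg) simp
    ultimately have "(\<Sum>k\<in>UNIV. 2 * (c $ k)\<^sup>2) = 0" by linarith
    then have "\<forall>k\<in>UNIV. 2 * (c $ k)\<^sup>2 = 0"
      by (subst (asm) sum_nonneg_eq_0_iff) auto
    then show "c = 0" by (simp add: vec_eq_iff)
  qed
  then obtain B where "B ** MR Y = mat 1" using matrix_left_invertible_ker by blast
  then have "invertible (MR Y)" using invertible_left_inverse by blast
  then show ?thesis using invertible_det_nz by blast
qed

lemma det3_cont:
  fixes M :: "real \<Rightarrow> real^3^3"
  assumes "\<And>k l. continuous_on S (\<lambda>t. M t $ k $ l)"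
  shows "continuous_on S (\<lambda>t. det (M t))"
  unfolding det_3 by (intro continuous_on_diff continuous_on_add continuous_on_mult assms)

lemma orient_Eich:
  fixes B :: U3mat
  assumes isoB: "\<And>a b. bil (B *v a) (B *v b) = bil a b" and ori: "orient_preserving B"
    and u: "qq u = 0" "bilG u x = 0"
  shows "orient_preserving (Eich u x ** B)"
proof -
  define U where "U = ofv u"
  define X where "X = ofv x"
  define BR where "BR = ofm B"
  define g where "g t = det (MR (Eich U (t *s X) ** BR))" for t
  have isoBR: "bilG (BR *v a) (BR *v b) = bilG a b" for a b
  proof (rule iso_from_basis)
    fix i j :: "3 \<times> 2"
    have "bilG (BR *v axis i 1) (BR *v axis j 1) = bilG (ofv (B *v axis i 1)) (ofv (B *v axis j 1))"
      by (simp add: BR_def ofm_mv[symmetric] ofv_axis)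
    also have "\<dots> = of_int (bil (axis i 1) (axis j 1))"
      by (simp add: bilG_ofv isoB[unfolded bil_bilG] bil_bilG)
    also have "\<dots> = bilG (axis i 1) (axis j 1)"
      by (simp add: bil_bilG bilG_ofv[symmetric] ofv_axis)
    finally show "bilG (BR *v axis i 1) (BR *v axis j 1) = bilG (axis i 1) (axis j 1)" .
  qed
  have qU: "qq U = 0" using u by (simp add: U_def qq_ofv)
  have bU: "bilG U (t *s X) = 0" for t using u by (simp add: U_def X_def bilG_ofv bilG_scale_right)
  have nz: "g t \<noteq> 0" for t
    unfolding g_def
    by (rule MR_nonsing) (simp add: matrix_vector_mul_assoc[symmetric] Eich_iso[OF qU bU] isoBR)
  have g0: "g 0 > 0"
    using ori by (simp add: g_def Eich_zero orient_MR BR_def)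
  have g1: "g 1 = det (MR (ofm (Eich u x ** B)))"
    by (simp add: g_def ofm_mult ofm_Eich U_def X_def BR_def)
  have ent: "MR (Eich U (t *s X) ** BR) $ k $ l =
      bilG (wR k) (BR *v wR l) - t * (bilG (BR *v wR l) U * bilG (wR k) X)
      + t * (bilG (BR *v wR l) X * bilG (wR k) U)
      - t * t * qq X * bilG (BR *v wR l) U * bilG (wR k) U" for t k l
    by (simp add: MR_def matrix_vector_mul_assoc[symmetric] Eich_mv EF_def bilG_lin qq_scale
        algebra_simps)
  have cont: "continuous_on {0..1} g"
    unfolding g_def by (rule det3_cont) (simp add: ent; intro continuous_intros)
  show ?thesis
  proof (rule ccontr)
    assume "\<not> orient_preserving (Eich u x ** B)"
    then have "g 1 \<le> 0" by (simp add: orient_MR g1)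
    then obtain t where "0 \<le> t" "t \<le> 1" "g t = 0"
      using IVT2'[where f=g and a=0 and b=1 and y=0] g0 cont by auto
    then show False using nz by blast
  qed
qed

section \<open>Integral Eichler transformations lie in SO+\<close>

lemma det_Eich:
  fixes u x :: U3
  assumes u: "qq u = 0" "bilG u x = 0"
  shows "det (Eich u x) = 1"
proof -
  have un: "bilG u (- x) = 0" using u by (simp add: bilG_neg_right)
  have "det (Eich u x) * det (Eich u (-x)) = 1"
    by (simp add: det_mul[symmetric] Eich_comp[OF u(1) u(2) un] Eich_zero)
  then have pm: "det (Eich u x) = 1 \<or> det (Eich u x) = -1" by (rule pos_zmult_eq_1_iff_lemma)
  define U where "U = ofv u"
  define X where "X = ofv x"
  have qU: "qq U = 0" using u by (simp add: U_def qq_ofv)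
  have bU: "bilG U ((1/2) *s X) = 0" using u by (simp add: U_def X_def bilG_ofv bilG_scale_right)
  have hh: "(1/2) *s X + (1/2) *s X = X" by (simp add: vec_eq_iff)
  have "real_of_int (det (Eich u x)) = det (Eich U X)"
    by (simp add: det_ofm[symmetric] ofm_Eich U_def X_def)
  also have "Eich U X = Eich U ((1/2) *s X) ** Eich U ((1/2) *s X)"
    using Eich_comp[OF qU bU bU] hh by simp
  also have "det \<dots> = (det (Eich U ((1/2) *s X)))\<^sup>2"
    by (simp add: det_mul power2_eq_square)
  finally have "real_of_int (det (Eich u x)) \<ge> 0" by simp
  then show ?thesis using pm by auto
qed

lemma Eich_SOplus:
  fixes u x :: U3
  assumes u: "qq u = 0" "bilG u x = 0" and B: "B \<in> SOplus_U3"
  shows "Eich u x ** B \<in> SOplus_U3"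
proof -
  have isoB: "\<And>a b. bil (B *v a) (B *v b) = bil a b" and dB: "det B = 1" and oB: "orient_preserving B"
    using B by (auto simp: SOplus_U3_def SO_U3_def)
  have "bil ((Eich u x ** B) *v a) ((Eich u x ** B) *v b) = bil a b" for a b
    using Eich_iso[OF u] isoB by (simp add: matrix_vector_mul_assoc[symmetric] bil_bilG)
  moreover have "det (Eich u x ** B) = 1" by (simp add: det_mul det_Eich[OF u] dB)
  moreover have "orient_preserving (Eich u x ** B)" by (rule orient_Eich[OF isoB oB u])
  ultimately show ?thesis by (simp add: SOplus_U3_def SO_U3_def)
qed

lemma bil_wpos: "bil (wpos k) (wpos l) = (if k = l then 2 else 0)"
  by (simp add: bil_bilG wpos_def e_def f_def bilG_add_left bilG_add_right bilG_axis_left axis_comp)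

lemma one_SOplus: "mat 1 \<in> SOplus_U3"
proof -
  have "det ((\<chi> k l. bil (wpos k) (mat 1 *v wpos l)) :: int^3^3) = (\<Prod>k\<in>(UNIV::3 set). (2::int))"
    by (subst det_diagonal) (simp_all add: bil_wpos)
  also have "\<dots> = 8" by (simp only: prod_constant) simp
  finally have "orient_preserving (mat 1)" by (simp add: orient_preserving_def)
  then show ?thesis by (simp add: SOplus_U3_def SO_U3_def)
qed

definition okE :: "U3 \<Rightarrow> U3 \<Rightarrow> bool" where
  "okE u x \<longleftrightarrow> (\<exists>k. k \<noteq> 0 \<and> (u = e k \<or> u = f k) \<and> x $ (k,0) = 0 \<and> x $ (k,1) = 0)"

lemma okE_props: assumes "okE u x" shows "qq u = 0" "bilG u x = 0"
  using assms by (auto simp: okE_def e_def f_def qq_axis bilG_axis_left)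

lemma okE_neg: "okE u x \<Longrightarrow> okE u (- x)"
  by (auto simp: okE_def)

inductive_set EG :: "U3mat set" where
  EG_one: "mat 1 \<in> EG"
| EG_step: "okE u x \<Longrightarrow> P \<in> EG \<Longrightarrow> Eich u x ** P \<in> EG"

lemma EG_Eich: "okE u x \<Longrightarrow> Eich u x \<in> EG"
  using EG_step[OF _ EG_one] by simp

lemma EG_mult: "P \<in> EG \<Longrightarrow> Q \<in> EG \<Longrightarrow> P ** Q \<in> EG"
  by (induction P rule: EG.induct) (auto simp: matrix_mul_assoc[symmetric] intro: EG_step)

lemma EG_inv: "P \<in> EG \<Longrightarrow> \<exists>Q\<in>EG. Q ** P = mat 1 \<and> P ** Q = mat 1"
proof (induction P rule: EG.induct)
  case EG_one
  then show ?case using EG.EG_one by auto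
next
  case (EG_step u x P)
  then obtain Q where Q: "Q \<in> EG" "Q ** P = mat 1" "P ** Q = mat 1" by blast
  have n: "okE u (-x)" using okE_neg[OF EG_step(1)] .
  have c1: "Eich u (-x) ** Eich u x = mat 1"
    using Eich_comp[OF okE_props(1)[OF n] okE_props(2)[OF n] okE_props(2)[OF EG_step(1)]]
    by (simp add: Eich_zero)
  have c2: "Eich u x ** Eich u (-x) = mat 1"
    using Eich_comp[OF okE_props(1)[OF n] okE_props(2)[OF EG_step(1)] okE_props(2)[OF n]]
    by (simp add: Eich_zero)
  have "Q ** Eich u (-x) \<in> EG" by (rule EG_mult[OF Q(1) EG_Eich[OF n]])
  moreover have "(Q ** Eich u (-x)) ** (Eich u x ** P) = mat 1"
    by (metis Q(2) c1 matrix_mul_assoc matrix_mul_lid)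
  moreover have "(Eich u x ** P) ** (Q ** Eich u (-x)) = mat 1"
    by (metis Q(3) c2 matrix_mul_assoc matrix_mul_lid)
  ultimately show ?case by blast
qed

lemma EG_SOplus: "P \<in> EG \<Longrightarrow> B \<in> SOplus_U3 \<Longrightarrow> P ** B \<in> SOplus_U3"
  by (induction P rule: EG.induct)
    (auto simp: matrix_mul_assoc[symmetric] intro: Eich_SOplus okE_props)

lemma EG_iso: "P \<in> EG \<Longrightarrow> bilG (P *v a) (P *v b) = bilG a b"
  using EG_SOplus[OF _ one_SOplus] by (simp add: SOplus_U3_def SO_U3_def bil_bilG)

definition supp :: "3 set \<Rightarrow> U3 \<Rightarrow> bool" where
  "supp T z \<longleftrightarrow> (\<forall>k c. k \<notin> T \<longrightarrow> z $ (k,c) = 0)"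
definition goodT :: "3 set \<Rightarrow> U3mat \<Rightarrow> bool" where
  "goodT T P \<longleftrightarrow> P \<in> EG \<and> (\<forall>z. supp T z \<longrightarrow> supp T (P *v z)) \<and>
     (\<forall>k. k \<notin> T \<longrightarrow> P *v e k = e k \<and> P *v f k = f k)"

lemma good_one: "goodT T (mat 1)" by (simp add: goodT_def EG_one)
lemma good_mult: "goodT T P \<Longrightarrow> goodT T Q \<Longrightarrow> goodT T (P ** Q)"
  by (simp add: goodT_def EG_mult matrix_vector_mul_assoc[symmetric])

lemma e_comp: "e k $ i = (if i = (k,0) then 1 else 0)" by (simp add: e_def axis_comp)
lemma f_comp: "f k $ i = (if i = (k,1) then 1 else 0)" by (simp add: f_def axis_comp)
lemma bil_ef[simp]: "bilG z (e k) = z $ (k,1)" "bilG z (f k) = z $ (k,0)"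
  "bilG (e k) z = z $ (k,1)" "bilG (f k) z = z $ (k,0)" "qq (e k) = 0" "qq (f k) = 0"
  by (simp_all add: e_def f_def bilG_axis_left bilG_axis_right qq_axis)
lemma sm_neg: "(- c) *s x = - (c *s (x::'a::comm_ring_1^'n))" by (simp add: vec_eq_iff)
lemma sm_one: "1 *s x = (x::'a::comm_ring_1^'n)" by (simp add: vec_eq_iff)
lemma sm_zero: "0 *s x = (0::'a::comm_ring_1^'n)" by (simp add: vec_eq_iff)
lemmas smx = sm_neg sm_one sm_zero
lemma EF_nth: "EF u x z $ i = z $ i - bilG z u * x $ i + bilG z x * u $ i - qq x * bilG z u * u $ i"
  by (simp add: EF_def)

lemma qq_sef[simp]: "qq (c *s e k) = 0" "qq (c *s f k) = 0"
  by (simp_all add: qq_scale)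

lemma good_move:
  assumes "p \<noteq> 0" "p \<in> T" "u = e p \<or> u = f p" "supp (T - {p}) x"
  shows "goodT T (Eich u x)"
proof -
  have ok: "okE u x" using assms unfolding okE_def supp_def by auto
  have xk: "x $ (k,c) = 0" if "k \<notin> T" for k c using assms(4) that by (simp add: supp_def)
  have uk: "u $ (k,c) = 0" if "k \<notin> T" for k c using assms(2,3) that by (auto simp: e_comp f_comp)
  have ku: "bilG (e k) u = 0" "bilG (f k) u = 0" if "k \<notin> T" for k
    using uk[OF that] by simp_all
  have "supp T (Eich u x *v z)" if "supp T z" for z
    using that xk uk unfolding supp_def by (simp add: Eich_mv EF_nth)
  moreover have "Eich u x *v e k = e k \<and> Eich u x *v f k = f k" if "k \<notin> T" for k
    using ku[OF that] xk[OF that] by (simp add: Eich_mv EF_def)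
  ultimately show ?thesis unfolding goodT_def using EG_Eich[OF ok] by blast
qed

lemma supp_e0: "0 \<in> T \<Longrightarrow> p \<noteq> 0 \<Longrightarrow> supp (T - {p}) (c *s e 0)" "0 \<in> T \<Longrightarrow> p \<noteq> 0 \<Longrightarrow> supp (T - {p}) (c *s f 0)"
  by (auto simp: supp_def e_comp f_comp)

lemma term_neg_e:
  assumes "p \<noteq> 0" "p \<in> T" "0 \<in> T"
  shows "\<exists>S. goodT T S \<and> S *v (- e p) = e p"
proof -
  have g: "goodT T (Eich (e p) (c *s f 0))" "goodT T (Eich (f p) (c *s e 0))" for c
    using good_move[OF assms(1,2)] supp_e0[OF assms(3,1)] by auto
  have ne: "p \<noteq> 0" "0 \<noteq> p" using assms by auto
  have s1: "EF (f p) (1 *s e 0) (- e p) = e 0 - e p"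
    using ne by (simp add: EF_def bilG_lin e_comp f_comp smx)
  have s2: "EF (e p) (2 *s f 0) (e 0 - e p) = e 0 + e p"
    using ne by (auto simp: vec_eq_iff EF_nth bilG_lin e_comp f_comp qq_sef)
  have s3: "EF (f p) (1 *s e 0) (e 0 + e p) = e p"
    using ne by (simp add: EF_def bilG_lin e_comp f_comp smx)
  let ?S = "Eich (f p) (1 *s e 0) ** Eich (e p) (2 *s f 0) ** Eich (f p) (1 *s e 0)"
  have "goodT T ?S" by (intro good_mult g)
  moreover have "?S *v (- e p) = e p"
    by (simp only: matrix_vector_mul_assoc[symmetric] Eich_mv s1 s2 s3)
  ultimately show ?thesis by blast
qed

lemma good_e0f0:
  assumes "p \<noteq> 0" "p \<in> T" "0 \<in> T"
  shows "goodT T (Eich (e p) (c *s f 0))" "goodT T (Eich (f p) (c *s e 0))"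
    "goodT T (Eich (e p) (c *s e 0))" "goodT T (Eich (f p) (c *s f 0))"
  by (rule good_move[OF assms(1,2)]; simp add: supp_e0[OF assms(3,1)])+

lemma term_f:
  assumes "p \<noteq> 0" "p \<in> T" "0 \<in> T"
  shows "\<exists>S. goodT T S \<and> S *v (f p) = e p"
proof -
  note g = good_e0f0[OF assms]
  have ne: "p \<noteq> 0" "0 \<noteq> p" using assms by auto
  have s1: "EF (e p) (1 *s e 0) (f p) = f p - e 0"
    using ne by (auto simp: vec_eq_iff EF_nth bilG_lin e_comp f_comp qq_sef)
  have s2: "EF (e p) ((-1) *s f 0) (f p - e 0) = f p - e 0 + f 0 + e p"
    using ne by (auto simp: vec_eq_iff EF_nth bilG_lin e_comp f_comp qq_sef)
  have s3: "EF (f p) ((-1) *s e 0) (f p - e 0 + f 0 + e p) = f 0 + e p"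
    using ne by (auto simp: vec_eq_iff EF_nth bilG_lin e_comp f_comp qq_sef)
  have s4: "EF (f p) (1 *s f 0) (f 0 + e p) = e p"
    using ne by (auto simp: vec_eq_iff EF_nth bilG_lin e_comp f_comp qq_sef)
  let ?S = "Eich (f p) (1 *s f 0) ** Eich (f p) ((-1) *s e 0) ** Eich (e p) ((-1) *s f 0) ** Eich (e p) (1 *s e 0)"
  have "goodT T ?S" by (intro good_mult g)
  moreover have "?S *v (f p) = e p"
    by (simp only: matrix_vector_mul_assoc[symmetric] Eich_mv s1 s2 s3 s4)
  ultimately show ?thesis by blast
qed

lemma term_neg_f:
  assumes "p \<noteq> 0" "p \<in> T" "0 \<in> T"
  shows "\<exists>S. goodT T S \<and> S *v (- f p) = e p"
proof -
  note g = good_e0f0[OF assms]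
  have ne: "p \<noteq> 0" "0 \<noteq> p" using assms by auto
  have s1: "EF (e p) (1 *s e 0) (- f p) = e 0 - f p"
    using ne by (auto simp: vec_eq_iff EF_nth bilG_lin e_comp f_comp qq_sef)
  have s2: "EF (e p) (1 *s f 0) (e 0 - f p) = e 0 - f p + f 0 + e p"
    using ne by (auto simp: vec_eq_iff EF_nth bilG_lin e_comp f_comp qq_sef)
  have s3: "EF (f p) (1 *s e 0) (e 0 - f p + f 0 + e p) = f 0 + e p"
    using ne by (auto simp: vec_eq_iff EF_nth bilG_lin e_comp f_comp qq_sef)
  have s4: "EF (f p) (1 *s f 0) (f 0 + e p) = e p"
    using ne by (auto simp: vec_eq_iff EF_nth bilG_lin e_comp f_comp qq_sef)
  let ?S = "Eich (f p) (1 *s f 0) ** Eich (f p) (1 *s e 0) ** Eich (e p) (1 *s f 0) ** Eich (e p) (1 *s e 0)"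
  have "goodT T ?S" by (intro good_mult g)
  moreover have "?S *v (- f p) = e p"
    by (simp only: matrix_vector_mul_assoc[symmetric] Eich_mv s1 s2 s3 s4)
  ultimately show ?thesis by blast
qed

section \<open>Transitivity on isotropic vectors\<close>

lemma TR:
  assumes p: "p \<noteq> 0" "p \<in> T" "0 \<in> T"
    and v: "supp T v" "bilG v v = 0" "bilG v w = 1"
  shows "\<exists>P. goodT T P \<and> P *v v = e p"
proof -
  define Good where "Good v \<longleftrightarrow> (\<exists>P. goodT T P \<and> P *v v = e p)" for v
  have via: "Good v" if "Good (Q *v v)" "goodT T Q" for Q v
    using that unfolding Good_def by (metis good_mult matrix_vector_mul_assoc)
  have pres: "supp T (Q *v v) \<and> bilG (Q *v v) (Q *v v) = 0 \<and> bilG (Q *v v) (Q *v w) = 1"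
    if "goodT T Q" "supp T v" "bilG v v = 0" "bilG v w = 1" for Q v w
    using that by (simp add: goodT_def EG_iso)
  have cc: "1 - c \<noteq> c" for c :: 2 using ex2[of c] by auto
  have main: "\<forall>v w. supp T v \<longrightarrow> bilG v v = 0 \<longrightarrow> bilG v w = 1 \<longrightarrow>
      (\<exists>i. fst i \<in> T \<and> \<bar>v$i\<bar> = int n) \<longrightarrow> n > 0 \<longrightarrow> Good v" for n
  proof (induction n rule: less_induct)
    case (less n)
    have IH: "Good v" if "supp T v" "bilG v v = 0" "bilG v w = 1" "fst i \<in> T" "v $ i \<noteq> 0"
      "\<bar>v$i\<bar> < int n" for v w i
      using less[rule_format, of "nat \<bar>v$i\<bar>" v w] that by (cases i) force
    have caseA: "Good v" if hv: "supp T v" "bilG v v = 0" "bilG v w = 1"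
      and ha: "\<bar>v $ (p,0)\<bar> = int n" "n > 0" for v w
    proof -
      define a where "a = v $ (p,0)"
      have a0: "a \<noteq> 0" using ha by (simp add: a_def)
      define x where "x = (\<chi> i. if fst i \<in> T \<and> fst i \<noteq> p then v $ i div a else 0)"
      have sx: "supp (T - {p}) x" by (auto simp: supp_def x_def)
      define Q where "Q = Eich (f p) x"
      have gQ: "goodT T Q" unfolding Q_def by (rule good_move[OF p(1,2)]) (simp_all add: sx)
      define v' where "v' = Q *v v"
      define w' where "w' = Q *v w"
      have hv': "supp T v'" "bilG v' v' = 0" "bilG v' w' = 1"
        using pres[OF gQ hv] by (simp_all add: v'_def w'_def)
      have v'c: "v' $ (k,c) = v $ (k,c) mod a" if "k \<in> T" "k \<noteq> p" for k c
        using that by (simp add: v'_def Q_def Eich_mv EF_nth x_def f_comp a_def minus_mult_div_eq_mod)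
      have v'p: "v' $ (p,0) = a"
        by (simp add: v'_def Q_def Eich_mv EF_nth x_def f_comp a_def)
      show ?thesis
      proof (cases "\<exists>k c. k \<in> T \<and> k \<noteq> p \<and> v' $ (k,c) \<noteq> 0")
        case True
        then obtain k c where kc: "k \<in> T" "k \<noteq> p" "v' $ (k,c) \<noteq> 0" by blast
        have "\<bar>v' $ (k,c)\<bar> < int n" using v'c[OF kc(1,2)] abs_mod_less[OF a0] ha by (simp add: a_def)
        then have "Good v'" using IH[OF hv', of "(k,c)"] kc by simp
        then show ?thesis using via gQ v'_def by blast
      next
        case False
        define b where "b = v' $ (p,1)"
        have v'eq: "v' = a *s e p + b *s f p"
        proof (subst vec_eq_iff, rule allI)
          fix i :: "3 \<times> 2"
          obtain k c where i: "i = (k,c)" by (cases i)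
          show "v' $ i = (a *s e p + b *s f p) $ i"
          proof (cases "k = p")
            case True then show ?thesis using ex2[of c] v'p b_def i by (auto simp: e_comp f_comp)
          next
            case kp: False
            have "v' $ (k,c) = 0"
            proof (cases "k \<in> T")
              case True then show ?thesis using False kp by blast
            next
              case False then show ?thesis using hv'(1) by (simp add: supp_def)
            qed
            then show ?thesis using kp i by (simp add: e_comp f_comp)
          qed
        qed
        have "bilG v' v' = 2 * a * b" by (simp add: v'eq bilG_lin e_comp f_comp)
        then have b0: "b = 0" using hv'(2) a0 by simp
        have "a * w' $ (p,1) = 1" using hv'(3) v'eq b0 by (simp add: bilG_lin)
        then have "a = 1 \<or> a = -1" by (rule pos_zmult_eq_1_iff_lemma)
        then show ?thesis
        proof
          assume "a = 1" then have "v' = e p" using v'eq b0 by (simp add: smx)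
          then have "Good v'" unfolding Good_def using good_one by (metis matrix_vector_mul_lid)
          then show ?thesis using via gQ v'_def by blast
        next
          assume "a = -1" then have "v' = - e p" using v'eq b0 by (simp add: smx)
          then have "Good v'" unfolding Good_def using term_neg_e[OF p] by metis
          then show ?thesis using via gQ v'_def by blast
        qed
      qed
    qed
    have caseC: "Good v" if hv: "supp T v" "bilG v v = 0" "bilG v w = 1"
      and ha: "\<bar>v $ (p,1)\<bar> = int n" "n > 0" for v w
    proof -
      define b where "b = v $ (p,1)"
      have b0: "b \<noteq> 0" using ha by (simp add: b_def)
      define x where "x = (\<chi> i. if fst i \<in> T \<and> fst i \<noteq> p then v $ i div b else 0)"
      have sx: "supp (T - {p}) x" by (auto simp: supp_def x_def)
      define Q where "Q = Eich (e p) x"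
      have gQ: "goodT T Q" unfolding Q_def by (rule good_move[OF p(1,2)]) (simp_all add: sx)
      define v' where "v' = Q *v v"
      define w' where "w' = Q *v w"
      have hv': "supp T v'" "bilG v' v' = 0" "bilG v' w' = 1"
        using pres[OF gQ hv] by (simp_all add: v'_def w'_def)
      have v'c: "v' $ (k,c) = v $ (k,c) mod b" if "k \<in> T" "k \<noteq> p" for k c
        using that by (simp add: v'_def Q_def Eich_mv EF_nth x_def e_comp b_def minus_mult_div_eq_mod)
      have v'p: "v' $ (p,1) = b"
        by (simp add: v'_def Q_def Eich_mv EF_nth x_def e_comp b_def)
      show ?thesis
      proof (cases "\<exists>k c. k \<in> T \<and> k \<noteq> p \<and> v' $ (k,c) \<noteq> 0")
        case True
        then obtain k c where kc: "k \<in> T" "k \<noteq> p" "v' $ (k,c) \<noteq> 0" by blast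
        have "\<bar>v' $ (k,c)\<bar> < int n" using v'c[OF kc(1,2)] abs_mod_less[OF b0] ha by (simp add: b_def)
        then have "Good v'" using IH[OF hv', of "(k,c)"] kc by simp
        then show ?thesis using via gQ v'_def by blast
      next
        case False
        define a where "a = v' $ (p,0)"
        have v'eq: "v' = a *s e p + b *s f p"
        proof (subst vec_eq_iff, rule allI)
          fix i :: "3 \<times> 2"
          obtain k c where i: "i = (k,c)" by (cases i)
          show "v' $ i = (a *s e p + b *s f p) $ i"
          proof (cases "k = p")
            case True then show ?thesis using ex2[of c] v'p a_def i by (auto simp: e_comp f_comp)
          next
            case kp: False
            have "v' $ (k,c) = 0"
            proof (cases "k \<in> T")
              case True then show ?thesis using False kp by blast
            next
              case False then show ?thesis using hv'(1) by (simp add: supp_def)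
            qed
            then show ?thesis using kp i by (simp add: e_comp f_comp)
          qed
        qed
        have "bilG v' v' = 2 * a * b" by (simp add: v'eq bilG_lin e_comp f_comp)
        then have a0: "a = 0" using hv'(2) b0 by simp
        have "b * w' $ (p,0) = 1" using hv'(3) v'eq a0 by (simp add: bilG_lin)
        then have "b = 1 \<or> b = -1" by (rule pos_zmult_eq_1_iff_lemma)
        then show ?thesis
        proof
          assume "b = 1" then have "v' = f p" using v'eq a0 by (simp add: smx)
          then have "Good v'" unfolding Good_def using term_f[OF p] by metis
          then show ?thesis using via gQ v'_def by blast
        next
          assume "b = -1" then have "v' = - f p" using v'eq a0 by (simp add: smx)
          then have "Good v'" unfolding Good_def using term_neg_f[OF p] by metis
          then show ?thesis using via gQ v'_def by blast
        qed
      qed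
    qed
    have caseB: "Good v" if hv: "supp T v" "bilG v v = 0" "bilG v w = 1"
      and hj: "j \<in> T" "j \<noteq> p" "\<bar>v $ (j,c)\<bar> = int n" "n > 0" for v w j c
    proof -
      define s where "s = v $ (j,c)"
      have s0: "s \<noteq> 0" using hj by (simp add: s_def)
      define \<beta> where "\<beta> = (axis (j, 1 - c) 1 :: U3)"
      have b\<beta>: "bilG z \<beta> = z $ (j,c)" for z by (simp add: \<beta>_def bilG_axis_right)
      have q\<beta>: "qq (k *s \<beta>) = 0" for k by (simp add: \<beta>_def qq_scale qq_axis)
      have s\<beta>: "supp (T - {p}) (k *s \<beta>)" for k
        using hj by (auto simp: supp_def \<beta>_def axis_comp)
      have \<beta>p: "\<beta> $ (p,c') = 0" for c' using hj by (simp add: \<beta>_def axis_comp)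
      have \<beta>j: "\<beta> $ (j,c) = 0" using cc[of c] by (simp add: \<beta>_def axis_comp)
      define k1 where "k1 = - (v $ (p,0) div s)"
      define Q1 where "Q1 = Eich (e p) (k1 *s \<beta>)"
      have gQ1: "goodT T Q1" unfolding Q1_def by (rule good_move[OF p(1,2)]) (simp_all add: s\<beta>)
      define v1 where "v1 = Q1 *v v"
      define w1 where "w1 = Q1 *v w"
      have hv1: "supp T v1" "bilG v1 v1 = 0" "bilG v1 w1 = 1"
        using pres[OF gQ1 hv] by (simp_all add: v1_def w1_def)
      have v1p: "v1 $ (p,0) = v $ (p,0) mod s"
        by (simp add: v1_def Q1_def Eich_mv EF_nth e_comp \<beta>p q\<beta> bilG_scale_right b\<beta> k1_def
            s_def[symmetric] minus_div_mult_eq_mod[symmetric])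
      have v1j: "v1 $ (j,c) = s"
        using hj by (simp add: v1_def Q1_def Eich_mv EF_nth e_comp \<beta>j s_def)
      show ?thesis
      proof (cases "v1 $ (p,0) = 0")
        case False
        have "\<bar>v1 $ (p,0)\<bar> < int n" using v1p abs_mod_less[OF s0] hj by (simp add: s_def)
        then have "Good v1" using IH[OF hv1, of "(p,0)"] False p by simp
        then show ?thesis using via gQ1 v1_def by blast
      next
        case v1p0: True
        define k2 where "k2 = - (v1 $ (p,1) div s)"
        define Q2 where "Q2 = Eich (f p) (k2 *s \<beta>)"
        have gQ2: "goodT T Q2" unfolding Q2_def by (rule good_move[OF p(1,2)]) (simp_all add: s\<beta>)
        define v2 where "v2 = Q2 *v v1"
        define w2 where "w2 = Q2 *v w1"
        have hv2: "supp T v2" "bilG v2 v2 = 0" "bilG v2 w2 = 1"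
          using pres[OF gQ2 hv1] by (simp_all add: v2_def w2_def)
        have v2p: "v2 $ (p,1) = v1 $ (p,1) mod s"
          by (simp add: v2_def Q2_def Eich_mv EF_nth f_comp \<beta>p q\<beta> bilG_scale_right b\<beta> k2_def v1j
              minus_div_mult_eq_mod[symmetric])
        have v2p0: "v2 $ (p,0) = 0"
          by (simp add: v2_def Q2_def Eich_mv EF_nth f_comp \<beta>p v1p0)
        have v2j: "v2 $ (j,c) = s"
          using hj by (simp add: v2_def Q2_def Eich_mv EF_nth f_comp \<beta>j v1j)
        show ?thesis
        proof (cases "v2 $ (p,1) = 0")
          case False
          have "\<bar>v2 $ (p,1)\<bar> < int n" using v2p abs_mod_less[OF s0] hj by (simp add: s_def)
          then have "Good v2" using IH[OF hv2, of "(p,1)"] False p by simp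
          then show ?thesis using via gQ1 gQ2 v1_def v2_def by blast
        next
          case v2p1: True
          define Q3 where "Q3 = Eich (e p) (1 *s \<beta>)"
          have gQ3: "goodT T Q3" unfolding Q3_def using good_move[OF p(1,2), of "e p" "1 *s \<beta>"] s\<beta>[of 1] by blast
          define v3 where "v3 = Q3 *v v2"
          define w3 where "w3 = Q3 *v w2"
          have hv3: "supp T v3" "bilG v3 v3 = 0" "bilG v3 w3 = 1"
            using pres[OF gQ3 hv2] by (simp_all add: v3_def w3_def)
          have v3p: "v3 $ (p,0) = s"
            by (simp add: v3_def Q3_def Eich_mv EF_nth e_comp \<beta>p q\<beta> bilG_scale_right b\<beta> v2j v2p0 v2p1 smx)
          have "Good v3" using caseA[OF hv3] v3p hj by (simp add: s_def)
          then show ?thesis using via gQ1 gQ2 gQ3 v1_def v2_def v3_def by blast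
        qed
      qed
    qed
    show ?case
    proof (intro allI impI)
      fix v w assume hv: "supp T v" "bilG v v = 0" "bilG v w = 1"
        and ex: "\<exists>i. fst i \<in> T \<and> \<bar>v$i\<bar> = int n" and n0: "0 < n"
      then obtain k c where kc: "k \<in> T" "\<bar>v$(k,c)\<bar> = int n" by auto
      show "Good v"
      proof (cases "k = p")
        case True
        then show ?thesis using ex2[of c] caseA[OF hv] caseC[OF hv] kc n0 by auto
      next
        case False
        show ?thesis using caseB[OF hv kc(1) False kc(2) n0] .
      qed
    qed
  qed
  have "v \<noteq> 0" using v(3) by auto
  then obtain i where i: "v $ i \<noteq> 0" by (auto simp: vec_eq_iff)
  have "fst i \<in> T" using v(1) i by (cases i) (auto simp: supp_def)
  then have "Good v" using main[of "nat \<bar>v$i\<bar>"] v i by (cases i) force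
  then show ?thesis by (simp add: Good_def)
qed


section \<open>Every element of SO+ is a product of Eichler transformations\<close>

lemma fix_f:
  fixes y :: U3
  assumes y1: "y $ (p,1) = 1" and iso: "bilG y y = 0"
  shows "\<exists>m. m $ (p,0) = 0 \<and> m $ (p,1) = 0 \<and> (\<forall>k c. k \<noteq> p \<longrightarrow> m $ (k,c) = y $ (k,c))
      \<and> EF (e p) m y = f p \<and> EF (e p) m (e p) = e p"
proof -
  define m where "m = (\<chi> i. if fst i = p then 0 else y $ i)"
  define a where "a = y $ (p,0)"
  have m0: "m $ (p,0) = 0" "m $ (p,1) = 0" by (simp_all add: m_def)
  have mk: "\<forall>k c. k \<noteq> p \<longrightarrow> m $ (k,c) = y $ (k,c)" by (simp add: m_def)
  have d: "y = m + a *s e p + f p"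
  proof (subst vec_eq_iff, rule allI)
    fix i :: "3 \<times> 2"
    obtain k c where i: "i = (k,c)" by (cases i)
    show "y $ i = (m + a *s e p + f p) $ i"
      using ex2[of c] i y1 by (cases "k = p") (auto simp: m_def a_def e_comp f_comp)
  qed
  have em: "bilG (e p) m = 0" "bilG (f p) m = 0" "bilG m (e p) = 0" "bilG m (f p) = 0"
    using m0 by simp_all
  have "bilG y y = 2 * qq m + 2 * a"
    by (subst (1 2) d, simp only: bilG_lin) (simp add: em m0 bilG_self e_comp f_comp)
  then have qa: "qq m = - a" using iso by simp
  have ym: "bilG y m = 2 * qq m" by (subst d) (simp add: bilG_lin em m0 bilG_self)
  have "EF (e p) m y $ i = f p $ i" for i
  proof -
    have "EF (e p) m y $ i = y $ i - m $ i - a * e p $ i"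
      by (simp add: EF_nth y1 ym qa)
    also have "\<dots> = f p $ i" by (subst d) simp
    finally show ?thesis .
  qed
  then have "EF (e p) m y = f p" by (simp add: vec_eq_iff)
  moreover have "EF (e p) m (e p) = e p" by (simp add: EF_def em m0 e_comp smx)
  ultimately show ?thesis using m0 mk by blast
qed

lemma prod3: "(\<Prod>k\<in>(UNIV::3 set). g k) = g 0 * g 1 * g 2"
  unfolding UNIV3 using n01 by (simp add: mult.assoc)

lemma orient_neg:
  assumes "R *v wpos 0 = - wpos 0" "R *v wpos 1 = wpos 1" "R *v wpos 2 = wpos 2"
  shows "\<not> orient_preserving R"
proof -
  have Rw: "R *v wpos l = (if l = 0 then -1 else 1) *s wpos l" for l
    using ex3[of l] assms by (auto simp: smx)
  have bw: "bil (wpos k) (R *v wpos l) = (if k = l then (if l = 0 then -2 else 2) else 0)" for k l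
    by (simp add: Rw bil_bilG bilG_scale_right bil_wpos[unfolded bil_bilG])
  have "det ((\<chi> k l. bil (wpos k) (R *v wpos l)) :: int^3^3) =
      (\<Prod>k\<in>(UNIV::3 set). (\<chi> k l. bil (wpos k) (R *v wpos l)) $ k $ k)"
    by (rule det_diagonal) (simp add: bw)
  also have "\<dots> = -8" unfolding prod3 using n01 by (simp add: bw)
  finally show ?thesis by (simp add: orient_preserving_def)
qed

lemma R_id:
  assumes "\<And>k. R *v e k = e k" "\<And>k. R *v f k = f k"
  shows "R = mat 1"
proof -
  have "R *v axis j 1 = axis j 1" for j
  proof -
    obtain k c where j: "j = (k,c)" by (cases j)
    show ?thesis using ex2[of c] assms j by (auto simp: e_def f_def)
  qed
  then show ?thesis by (simp add: vec_eq_iff mat_col[symmetric] mat_def axis_comp)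
qed

lemma R_swap:
  assumes "R *v e 0 = f 0" "R *v f 0 = e 0" "\<And>k. k \<noteq> 0 \<Longrightarrow> R *v e k = e k"
    "\<And>k. k \<noteq> 0 \<Longrightarrow> R *v f k = f k"
  shows "det R = -1"
proof -
  define \<sigma> where "\<sigma> = Transposition.transpose ((0::3),(0::2)) (0,1)"
  have ne: "((0::3),(0::2)) \<noteq> (0,1)" by simp
  have perm: "\<sigma> permutes UNIV" unfolding \<sigma>_def by (rule permutes_swap_id) auto
  have "R *v axis j 1 = axis (\<sigma> j) 1" for j
  proof -
    obtain k c where j: "j = (k,c)" by (cases j)
    show ?thesis
    proof (cases "k = 0")
      case True then show ?thesis using ex2[of c] assms j
        by (auto simp: e_def f_def \<sigma>_def Transposition.transpose_def)
    next
      case False then show ?thesis using ex2[of c] assms j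
        by (auto simp: e_def f_def \<sigma>_def Transposition.transpose_def)
    qed
  qed
  then have "R = (\<chi> i. mat 1 $ \<sigma> i)"
    by (auto simp: vec_eq_iff mat_col[symmetric] mat_def axis_comp \<sigma>_def Transposition.transpose_def)
  then have "det R = det (\<chi> i. (mat 1 :: U3mat) $ \<sigma> i)" by simp
  also have "\<dots> = of_int (sign \<sigma>) * det (mat 1 :: U3mat)"
    by (rule det_permute_rows[OF perm])
  also have "\<dots> = -1" using ne by (simp add: \<sigma>_def sign_swap_id)
  finally show ?thesis .
qed


lemma vec0:
  assumes "\<And>k c. k \<noteq> 0 \<Longrightarrow> y $ (k,c) = 0"
  shows "y = y $ (0,0) *s e 0 + y $ (0,1) *s f 0"
proof (subst vec_eq_iff, rule allI)
  fix i :: "3 \<times> 2"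
  obtain k c where i: "i = (k,c)" by (cases i)
  show "y $ i = (y $ (0,0) *s e 0 + y $ (0,1) *s f 0) $ i"
    using ex2[of c] i assms[of k c] by (cases "k = 0") (auto simp: e_comp f_comp)
qed

lemma bil_plane0: "bilG (a *s e 0 + b *s f 0) (c *s e 0 + d *s f 0) = a * d + b * c"
  by (simp add: bilG_lin e_comp f_comp)

lemma SOplus_EG:
  assumes A: "A \<in> SOplus_U3"
  shows "A \<in> EG"
proof -
  have isoS: "bilG (B *v a) (B *v b) = bilG a b" if "B \<in> SOplus_U3" for B a b
    using that by (simp add: SOplus_U3_def SO_U3_def bil_bilG)
  have ee: "bilG (e k) (e l) = 0" "bilG (f k) (f l) = 0" "bilG (e k) (f l) = (if k = l then 1 else 0)"
    "bilG (f k) (e l) = (if k = l then 1 else 0)" for k l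
    by (simp_all add: e_comp f_comp)
  have n1: "(1::3) \<noteq> 0" by simp
  obtain P1 where P1: "goodT UNIV P1" "P1 *v (A *v e 1) = e 1"
    using TR[OF n1, of UNIV "A *v e 1" "A *v f 1"] isoS[OF A] by (auto simp: supp_def ee e_comp f_comp)
  define A1 where "A1 = P1 ** A"
  have A1: "A1 \<in> SOplus_U3" using EG_SOplus P1(1) A by (simp add: A1_def goodT_def)
  have A1e: "A1 *v e 1 = e 1" using P1(2) by (simp add: A1_def matrix_vector_mul_assoc[symmetric])
  define y where "y = A1 *v f 1"
  have y1: "y $ (1,1) = 1" using isoS[OF A1, of "f 1" "e 1"] by (simp add: y_def A1e ee e_comp f_comp)
  have yi: "bilG y y = 0" using isoS[OF A1, of "f 1" "f 1"] by (simp add: y_def ee e_comp f_comp)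
  obtain m1 where m1: "m1 $ (1,0) = 0" "m1 $ (1,1) = 0" "EF (e 1) m1 y = f 1" "EF (e 1) m1 (e 1) = e 1"
    using fix_f[OF y1 yi] by blast
  have ok1: "okE (e 1) m1" using m1 n1 unfolding okE_def by blast
  define A2 where "A2 = Eich (e 1) m1 ** A1"
  have A2: "A2 \<in> SOplus_U3" using Eich_SOplus[OF okE_props[OF ok1] A1] by (simp add: A2_def)
  have A2e1: "A2 *v e 1 = e 1" "A2 *v f 1 = f 1"
    by (simp_all add: A2_def matrix_vector_mul_assoc[symmetric] A1e Eich_mv m1 y_def[symmetric])
  have n2: "(2::3) \<noteq> 0" "(2::3) \<in> {0,2}" "(0::3) \<in> {0,2}" by simp_all
  define v where "v = A2 *v e 2"
  have v11: "v $ (1,1) = 0" using isoS[OF A2, of "e 2" "e 1"] by (simp add: v_def A2e1 ee e_comp f_comp)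
  have v10: "v $ (1,0) = 0" using isoS[OF A2, of "e 2" "f 1"] by (simp add: v_def A2e1 ee e_comp f_comp)
  have vs: "supp {0,2} v"
    unfolding supp_def
  proof (intro allI impI)
    fix k c assume "k \<notin> {0::3, 2}"
    then have "k = 1" using ex3[of k] by auto
    then show "v $ (k,c) = 0" using ex2[of c] v11 v10 by auto
  qed
  have "\<exists>P. goodT {0,2} P \<and> P *v v = e 2"
    using TR[OF n2, of v "A2 *v f 2"] vs isoS[OF A2] by (simp add: v_def ee e_comp f_comp)
  then obtain P2 where P2: "goodT {0,2} P2" "P2 *v v = e 2" by blast
  define A3 where "A3 = P2 ** A2"
  have A3: "A3 \<in> SOplus_U3" using EG_SOplus P2(1) A2 by (simp add: A3_def goodT_def)
  have n1T: "(1::3) \<notin> {0,2}" by simp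
  have A3e: "A3 *v e 2 = e 2" "A3 *v e 1 = e 1" "A3 *v f 1 = f 1"
    using P2 n1T by (simp_all add: A3_def matrix_vector_mul_assoc[symmetric] v_def[symmetric] A2e1 goodT_def)
  define y' where "y' = A3 *v f 2"
  have y'1: "y' $ (2,1) = 1" using isoS[OF A3, of "f 2" "e 2"] by (simp add: y'_def A3e ee e_comp f_comp)
  have y'i: "bilG y' y' = 0" using isoS[OF A3, of "f 2" "f 2"] by (simp add: y'_def ee e_comp f_comp)
  have y'10: "y' $ (1,1) = 0" "y' $ (1,0) = 0"
    using isoS[OF A3, of "f 2" "e 1"] isoS[OF A3, of "f 2" "f 1"] by (simp_all add: y'_def A3e ee e_comp f_comp)
  obtain m2 where m2: "m2 $ (2,0) = 0" "m2 $ (2,1) = 0" "\<forall>k c. k \<noteq> 2 \<longrightarrow> m2 $ (k,c) = y' $ (k,c)"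
    "EF (e 2) m2 y' = f 2" "EF (e 2) m2 (e 2) = e 2"
    using fix_f[OF y'1 y'i] by blast
  have m21: "m2 $ (1,0) = 0" "m2 $ (1,1) = 0" using m2(3) y'10 by auto
  have ok2: "okE (e 2) m2" using m2 n2 unfolding okE_def by blast
  define R where "R = Eich (e 2) m2 ** A3"
  have R: "R \<in> SOplus_U3" using Eich_SOplus[OF okE_props[OF ok2] A3] by (simp add: R_def)
  have Re1: "R *v e 1 = e 1" "R *v f 1 = f 1"
    using m21 by (simp_all add: R_def matrix_vector_mul_assoc[symmetric] A3e Eich_mv EF_def ee e_comp f_comp smx)
  have Re2: "R *v e 2 = e 2" "R *v f 2 = f 2"
    using m2 by (simp_all add: R_def matrix_vector_mul_assoc[symmetric] A3e Eich_mv y'_def[symmetric])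
  have Rk: "R *v e k = e k" "R *v f k = f k" if "k \<noteq> 0" for k
    using ex3[of k] that Re1 Re2 by auto
  define Pr where "Pr = Eich (e 2) m2 ** P2 ** Eich (e 1) m1 ** P1"
  have Pr: "Pr \<in> EG" unfolding Pr_def
    using P1(1) P2(1) EG_Eich[OF ok1] EG_Eich[OF ok2] by (simp add: goodT_def EG_mult)
  have RPr: "R = Pr ** A" by (simp add: R_def A3_def A2_def A1_def Pr_def matrix_mul_assoc)
  obtain Q where Q: "Q \<in> EG" "Q ** Pr = mat 1" using EG_inv[OF Pr] by blast
  have AQR: "A = Q ** R" by (metis Q(2) RPr matrix_mul_assoc matrix_mul_lid)
  define y0 where "y0 = R *v e 0"
  define y1 where "y1 = R *v f 0"
  have y0z: "y0 $ (k,c) = 0" if "k \<noteq> 0" for k c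
  proof -
    have "y0 $ (k,1) = 0" using isoS[OF R, of "e 0" "e k"] that by (simp add: y0_def Rk ee e_comp f_comp)
    moreover have "y0 $ (k,0) = 0" using isoS[OF R, of "e 0" "f k"] that by (simp add: y0_def Rk ee e_comp f_comp)
    ultimately show ?thesis using ex2[of c] by auto
  qed
  have y1z: "y1 $ (k,c) = 0" if "k \<noteq> 0" for k c
  proof -
    have "y1 $ (k,1) = 0" using isoS[OF R, of "f 0" "e k"] that by (simp add: y1_def Rk ee e_comp f_comp)
    moreover have "y1 $ (k,0) = 0" using isoS[OF R, of "f 0" "f k"] that by (simp add: y1_def Rk ee e_comp f_comp)
    ultimately show ?thesis using ex2[of c] by auto
  qed
  define \<alpha> where "\<alpha> = y0 $ (0,0)"
  define \<beta> where "\<beta> = y0 $ (0,1)"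
  define \<gamma> where "\<gamma> = y1 $ (0,0)"
  define \<delta> where "\<delta> = y1 $ (0,1)"
  have y0e: "y0 = \<alpha> *s e 0 + \<beta> *s f 0" unfolding \<alpha>_def \<beta>_def by (rule vec0) (rule y0z)
  have y1e: "y1 = \<gamma> *s e 0 + \<delta> *s f 0" unfolding \<gamma>_def \<delta>_def by (rule vec0) (rule y1z)
  have "\<alpha> * \<beta> + \<beta> * \<alpha> = 0"
    using isoS[OF R, of "e 0" "e 0"] bil_plane0[of \<alpha> \<beta> \<alpha> \<beta>] by (simp add: y0_def[symmetric] y0e ee e_comp f_comp)
  then have ab: "\<alpha> * \<beta> = 0" by simp
  have "\<gamma> * \<delta> + \<delta> * \<gamma> = 0"
    using isoS[OF R, of "f 0" "f 0"] bil_plane0[of \<gamma> \<delta> \<gamma> \<delta>] by (simp add: y1_def[symmetric] y1e ee e_comp f_comp)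
  then have cd: "\<gamma> * \<delta> = 0" by auto
  have ad: "\<alpha> * \<delta> + \<beta> * \<gamma> = 1"
    using isoS[OF R, of "e 0" "f 0"] bil_plane0[of \<alpha> \<beta> \<gamma> \<delta>]
    by (simp add: y0_def[symmetric] y1_def[symmetric] y0e y1e ee e_comp f_comp)
  have wk: "R *v wpos k = wpos k" if "k \<noteq> 0" for k
    using Rk[OF that] by (simp add: wpos_def matrix_vector_right_distrib)
  have oR: "orient_preserving R" and dR: "det R = 1" using R by (simp_all add: SOplus_U3_def SO_U3_def)
  have "R = mat 1"
  proof (cases "\<beta> = 0")
    case True
    then have "\<alpha> * \<delta> = 1" using ad by simp
    then have ad1: "(\<alpha> = 1 \<and> \<delta> = 1) \<or> (\<alpha> = -1 \<and> \<delta> = -1)" using zmult_eq_1_iff by blast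
    then have g0: "\<gamma> = 0" using cd by auto
    show ?thesis using ad1
    proof
      assume h: "\<alpha> = 1 \<and> \<delta> = 1"
      have "R *v e 0 = e 0" "R *v f 0 = f 0"
        using y0e y1e h True g0 by (simp_all add: y0_def y1_def smx)
      then have "R *v e k = e k \<and> R *v f k = f k" for k using Rk by (cases "k = 0") auto
      then show ?thesis by (intro R_id) auto
    next
      assume h: "\<alpha> = -1 \<and> \<delta> = -1"
      have "R *v e 0 = - e 0" "R *v f 0 = - f 0"
        using y0e y1e h True g0 by (simp_all add: y0_def y1_def smx)
      then have "R *v wpos 0 = - wpos 0" by (simp add: wpos_def matrix_vector_right_distrib)
      then have False using orient_neg[of R] wk oR by simp
      then show ?thesis ..
    qed
  next
    case False
    then have a0: "\<alpha> = 0" using ab by simp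
    then have "\<beta> * \<gamma> = 1" using ad by simp
    then have bc1: "(\<beta> = 1 \<and> \<gamma> = 1) \<or> (\<beta> = -1 \<and> \<gamma> = -1)" using zmult_eq_1_iff by blast
    then have d0: "\<delta> = 0" using cd by auto
    show ?thesis using bc1
    proof
      assume h: "\<beta> = 1 \<and> \<gamma> = 1"
      have "R *v e 0 = f 0" "R *v f 0 = e 0"
        using y0e y1e h a0 d0 by (simp_all add: y0_def y1_def smx)
      then have "det R = -1" using R_swap[of R] Rk by blast
      then show ?thesis using dR by simp
    next
      assume h: "\<beta> = -1 \<and> \<gamma> = -1"
      have "R *v e 0 = - f 0" "R *v f 0 = - e 0"
        using y0e y1e h a0 d0 by (simp_all add: y0_def y1_def smx)
      then have "R *v wpos 0 = - wpos 0" by (simp add: wpos_def matrix_vector_right_distrib)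
      then have False using orient_neg[of R] wk oR by simp
      then show ?thesis ..
    qed
  qed
  then show ?thesis using AQR Q(1) by simp
qed

lemma SOplus_inv: "A \<in> SOplus_U3 \<Longrightarrow> \<exists>Q\<in>SOplus_U3. Q ** A = mat 1"
  using SOplus_EG EG_inv EG_SOplus[OF _ one_SOplus] by fastforce

lemma group_SOplus: "group SOplus_group"
  apply (rule groupI)
      apply (simp_all add: SOplus_group_def matrix_mul_assoc one_SOplus SOplus_inv)
  using EG_SOplus SOplus_EG by blast

lemma stab_mem:
  fixes u z s :: U3
  assumes "qq u = 0" "bilG u z = 0" "bilG s z = 0" "bilG s u = 0"
  shows "Eich u z \<in> SOplus_stab s"
proof -
  have "Eich u z ** mat 1 \<in> SOplus_U3" by (rule Eich_SOplus[OF assms(1,2) one_SOplus])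
  moreover have "Eich u z *v s = s" using assms(3,4) by (simp add: Eich_mv EF_def smx)
  ultimately show ?thesis by (simp add: SOplus_stab_def)
qed

lemma Eich_gen:
  fixes d :: int
  assumes "okE u x"
  shows "Eich u x \<in> generate SOplus_group (SOplus_stab (e 0 + d *s f 0) \<union> SOplus_stab (d *s e 0 + f 0)
            \<union> SOplus_stab (e 0 + (d + 1) *s f 0) \<union> SOplus_stab ((d + 1) *s e 0 + f 0))"
    (is "_ \<in> generate _ ?H")
proof -
  obtain k where k: "k \<noteq> 0" "u = e k \<or> u = f k" "x $ (k,0) = 0" "x $ (k,1) = 0"
    using assms unfolding okE_def by blast
  define a where "a = x $ (0,0)"
  define b where "b = x $ (0,1)"
  define r where "r = (\<chi> i. if fst i = 0 then 0 else x $ i)"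
  define y1 where "y1 = a *s ((d + 1) *s e 0 - f 0)"
  define y2 where "y2 = (- a) *s (d *s e 0 - f 0)"
  define y3 where "y3 = b *s (e 0 - d *s f 0)"
  define y4 where "y4 = (- b) *s (e 0 - (d + 1) *s f 0)"
  have xs: "x = r + ((y1 + y2) + (y3 + y4))"
  proof (subst vec_eq_iff, rule allI)
    fix i :: "3 \<times> 2"
    obtain j c where i: "i = (j,c)" by (cases i)
    show "x $ i = (r + ((y1 + y2) + (y3 + y4))) $ i"
      using ex2[of c] i by (cases "j = 0")
        (auto simp: r_def y1_def y2_def y3_def y4_def e_comp f_comp a_def b_def algebra_simps)
  qed
  have qu: "qq u = 0" using k(2) by auto
  have u0c: "u $ (0,c) = 0" for c using k(1,2) by (auto simp: e_comp f_comp)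
  have ku: "bilG u w = w $ (k,1) \<or> bilG u w = w $ (k,0)" for w using k(2) by auto
  have u0: "bilG u w = 0" if "w $ (k,0) = 0" "w $ (k,1) = 0" for w using ku[of w] that by auto
  have bu: "bilG u r = 0" "bilG u y1 = 0" "bilG u y2 = 0" "bilG u y3 = 0" "bilG u y4 = 0"
    by (rule u0; use k in \<open>simp add: r_def y1_def y2_def y3_def y4_def e_comp f_comp\<close>)+
  have su: "bilG s u = 0" if "s $ (k,0) = 0" "s $ (k,1) = 0" for s
    using u0[OF that] by (simp add: bilG_sym)
  have E: "Eich u x = Eich u r ** ((Eich u y1 ** Eich u y2) ** (Eich u y3 ** Eich u y4))"
    by (simp add: xs Eich_comp qu bu bilG_add_right)
  have m: "Eich u r \<in> ?H" "Eich u y1 \<in> ?H" "Eich u y2 \<in> ?H" "Eich u y3 \<in> ?H" "Eich u y4 \<in> ?H"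
  proof -
    have "Eich u r \<in> SOplus_stab (e 0 + d *s f 0)"
      by (rule stab_mem[OF qu bu(1)]) (use k in \<open>simp_all add: r_def bilG_lin e_comp f_comp su u0c\<close>)
    then show "Eich u r \<in> ?H" by blast
    have "Eich u y1 \<in> SOplus_stab ((d + 1) *s e 0 + f 0)"
      by (rule stab_mem[OF qu bu(2)]) (use k in \<open>simp_all add: y1_def bilG_lin e_comp f_comp su u0c algebra_simps\<close>)
    then show "Eich u y1 \<in> ?H" by blast
    have "Eich u y2 \<in> SOplus_stab (d *s e 0 + f 0)"
      by (rule stab_mem[OF qu bu(3)]) (use k in \<open>simp_all add: y2_def bilG_lin e_comp f_comp su u0c algebra_simps\<close>)
    then show "Eich u y2 \<in> ?H" by blast
    have "Eich u y3 \<in> SOplus_stab (e 0 + d *s f 0)"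
      by (rule stab_mem[OF qu bu(4)]) (use k in \<open>simp_all add: y3_def bilG_lin e_comp f_comp su u0c algebra_simps\<close>)
    then show "Eich u y3 \<in> ?H" by blast
    have "Eich u y4 \<in> SOplus_stab (e 0 + (d + 1) *s f 0)"
      by (rule stab_mem[OF qu bu(5)]) (use k in \<open>simp_all add: y4_def bilG_lin e_comp f_comp su u0c algebra_simps\<close>)
    then show "Eich u y4 \<in> ?H" by blast
  qed
  have g: "X \<in> generate SOplus_group ?H" if "X \<in> ?H" for X using generate.incl[OF that] .
  have gm: "X ** Y \<in> generate SOplus_group ?H"
    if "X \<in> generate SOplus_group ?H" "Y \<in> generate SOplus_group ?H" for X Y
    using generate.eng[OF that] by (simp add: SOplus_group_def)
  show ?thesis unfolding E by (intro gm g m)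
qed

theorem lemma3:
  fixes d :: int
  assumes "d \<ge> 1"
  shows "generate SOplus_group
           (SOplus_stab (e 0 + d *s f 0) \<union> SOplus_stab (d *s e 0 + f 0)
            \<union> SOplus_stab (e 0 + (d + 1) *s f 0) \<union> SOplus_stab ((d + 1) *s e 0 + f 0))
         = carrier SOplus_group"
    (is "generate _ ?H = _")
proof
  have Hsub: "?H \<subseteq> carrier SOplus_group" by (auto simp: SOplus_stab_def SOplus_group_def)
  show "generate SOplus_group ?H \<subseteq> carrier SOplus_group"
    using group.generate_in_carrier[OF group_SOplus Hsub] by blast
  show "carrier SOplus_group \<subseteq> generate SOplus_group ?H"
  proof
    fix A assume "A \<in> carrier SOplus_group"
    then have "A \<in> EG" by (simp add: SOplus_group_def SOplus_EG)
    then show "A \<in> generate SOplus_group ?H"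
    proof (induction rule: EG.induct)
      case EG_one
      then show ?case using generate.one[of SOplus_group ?H] by (simp add: SOplus_group_def)
    next
      case (EG_step u x P)
      then show ?case using generate.eng[OF Eich_gen[OF EG_step(1)] EG_step(3)]
        by (simp add: SOplus_group_def)
    qed
  qed
qed

end
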